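(* Let $X,Y$ be Banach spaces, let $S$ be a subset of $X$ (with the induced metric), and let $f:S\to Y$ be a coarse homeomorphism that is coarse Lipschitz; let $g:Y\to S$ be a coarsely continuous map with $\sup_{x\in S}\|g(f(x))-x\|<\infty$ and $K:=\sup_{y\in Y}\|f(g(y))-y\|<\infty$. Then for all $0<t\le1$, $$\bar{\delta}_X\left(\frac{t}{56\,{\rm Lip}_\infty(f)\,c_\infty(f)}\right)\le\bar{\rho}_Y(t),$$ where $c_\infty(f)$ is computed with respect to the constant $K$.
   Context: All Banach spaces are real and infinite-dimensional; $B_X,S_X$ are the closed unit ball and sphere; $B_Z(z,r)$ is the closed ball of radius $r$ about $z$; for $A\subseteq Y$, $A^K:=\{y:\|y-a\|\le K\text{ for some }a\in A\}$. $\bar{\rho}_Y(t):=\sup_{y\in S_Y}\inf_{\dim(Y/Z)<\infty}\sup_{z\in S_Z}\|y+tz\|-1$ and $\bar{\delta}_X(t):=\inf_{x\in S_X}\sup_{\dim(X/Z)<\infty}\inf_{z\in S_Z}\|x+tz\|-1$ (over finite-codimensional subspaces $Z$). A map $h$ between metric spaces is coarsely continuous if $\omega_h(t):=\sup\{d(h(x),h(y)): d(x,y)\le t\}<\infty$ for all $t>0$. $f:S\to Y$ is a coarse homeomorphism if it is coarsely continuous and there is a coarsely continuous $g:Y\to S$ with $\sup_x\|g(f(x))-x\|<\infty$ and $\sup_y\|f(g(y))-y\|<\infty$; it is known that then $f$ is co-coarsely continuous with constant $K=\sup_y\|f(g(y))-y\|$, i.e. for every $d>K$ there is $\delta(d)>0$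 with $f(B_S(x,\delta))^K\supseteq B_Y(f(x),d)$ for all $x\in S$. ${\rm Lip}_s(f):=\sup\{\|f(x)-f(y)\|/\|x-y\|:\|x-y\|\ge s\}$, ${\rm Lip}_\infty(f):=\inf_{s>0}{\rm Lip}_s(f)$; $f$ is coarse Lipschitz if ${\rm Lip}_s(f)<\infty$ for some $s>0$. For $d>K$, $c_d$ is the infimum of all $c>0$ with $f(B_S(x,cr))^K\supseteq B_Y(f(x),r)$ for all $x\in S$, $r\ge d$, and $c_\infty(f):=\inf_{d>K}c_d=\lim_{d\to\infty}c_d$. *)

theory Defs
  imports "HOL-Analysis.Analysis" "HOL-Library.Extended_Real"
begin

definition infinite_dimensional :: "'a::real_vector itself \<Rightarrow> bool" where
  "infinite_dimensional TYPE('a) \<longleftrightarrow> (\<forall>B::'a set. finite B \<longrightarrow> span B \<noteq> UNIV)"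

definition fin_codim :: "'a::real_vector set \<Rightarrow> bool" where
  "fin_codim Z \<longleftrightarrow> subspace Z \<and> (\<exists>F. finite F \<and> span (Z \<union> F) = UNIV)"

definition rho_bar :: "'a::real_normed_vector itself \<Rightarrow> real \<Rightarrow> real" where
  "rho_bar TYPE('a) t =
     (SUP y\<in>sphere (0::'a) 1. INF Z\<in>{Z. fin_codim Z}. SUP z\<in>sphere 0 1 \<inter> Z. norm (y + t *\<^sub>R z)) - 1"

definition delta_bar :: "'a::real_normed_vector itself \<Rightarrow> real \<Rightarrow> real" where
  "delta_bar TYPE('a) t =
     (INF x\<in>sphere (0::'a) 1. SUP Z\<in>{Z. fin_codim Z}. INF z\<in>sphere 0 1 \<inter> Z. norm (x + t *\<^sub>R z)) - 1"

definition coarsely_continuous_on :: "'a::metric_space set \<Rightarrow> ('a \<Rightarrow> 'b::metric_space) \<Rightarrow> bool" where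
  "coarsely_continuous_on S h \<longleftrightarrow>
     (\<forall>t>0. bdd_above {dist (h x) (h y) |x y. x \<in> S \<and> y \<in> S \<and> dist x y \<le> t})"

definition Lip_s :: "'a::real_normed_vector set \<Rightarrow> ('a \<Rightarrow> 'b::real_normed_vector) \<Rightarrow> real \<Rightarrow> ereal" where
  "Lip_s S f s = Sup {ereal (norm (f x - f y) / norm (x - y)) |x y. x \<in> S \<and> y \<in> S \<and> norm (x - y) \<ge> s}"

definition Lip_inf :: "'a::real_normed_vector set \<Rightarrow> ('a \<Rightarrow> 'b::real_normed_vector) \<Rightarrow> ereal" where
  "Lip_inf S f = (INF s\<in>{0<..}. Lip_s S f s)"

definition coarse_Lipschitz_on :: "'a::real_normed_vector set \<Rightarrow> ('a \<Rightarrow> 'b::real_normed_vector) \<Rightarrow> bool" where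
  "coarse_Lipschitz_on S f \<longleftrightarrow> (\<exists>s>0. Lip_s S f s < \<infinity>)"

definition nbhd :: "'a::real_normed_vector set \<Rightarrow> real \<Rightarrow> 'a set" where
  "nbhd A K = {y. \<exists>a\<in>A. norm (y - a) \<le> K}"

definition c_d :: "'a::real_normed_vector set \<Rightarrow> ('a \<Rightarrow> 'b::real_normed_vector) \<Rightarrow> real \<Rightarrow> real \<Rightarrow> ereal" where
  "c_d S f K d = Inf {ereal c |c. c > 0 \<and>
      (\<forall>x\<in>S. \<forall>r\<ge>d. cball (f x) r \<subseteq> nbhd (f ` (S \<inter> cball x (c * r))) K)}"

definition c_inf :: "'a::real_normed_vector set \<Rightarrow> ('a \<Rightarrow> 'b::real_normed_vector) \<Rightarrow> real \<Rightarrow> ereal" where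
  "c_inf S f K = (INF d\<in>{K<..}. c_d S f K d)"

end

theory Submission
  imports Defs
begin


lemma infdist_lessE:
  assumes "A \<noteq> {}" "infdist x A < d"
  obtains a where "a \<in> A" "dist x a < d"
proof -
  have "(INF a\<in>A. dist x a) < d" using assms infdist_notempty by metis
  moreover have "bdd_below ((\<lambda>a. dist x a) ` A)" by (rule bdd_belowI[where m=0]) auto
  ultimately show ?thesis using that assms(1) by (auto simp: cINF_less_iff)
qed

lemma infdist_sub_add:
  fixes E :: "'a::real_normed_vector set"
  assumes "subspace E"
  shows "infdist (u+v) E \<le> infdist u E + infdist v E"
proof (rule field_le_epsilon)
  fix e :: real assume e: "0 < e"
  have ne: "E \<noteq> {}" using assms subspace_0 by auto
  obtain a where a: "a \<in> E" "dist u a < infdist u E + e/2"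
    using infdist_lessE[OF ne, of u "infdist u E + e/2"] e by auto
  obtain b where b: "b \<in> E" "dist v b < infdist v E + e/2"
    using infdist_lessE[OF ne, of v "infdist v E + e/2"] e by auto
  have "a + b \<in> E" using a b assms subspace_add by blast
  hence "infdist (u+v) E \<le> dist (u+v) (a+b)" by (rule infdist_le)
  also have "\<dots> \<le> dist u a + dist v b"
    by (simp add: dist_norm) (metis add_diff_add norm_triangle_ineq)
  finally show "infdist (u+v) E \<le> infdist u E + infdist v E + e" using a b by linarith
qed

lemma infdist_sub_scale_le:
  fixes E :: "'a::real_normed_vector set"
  assumes "subspace E"
  shows "infdist (c *\<^sub>R u) E \<le> \<bar>c\<bar> * infdist u E"
proof -
  have ne: "E \<noteq> {}" using assms subspace_0 by auto
  show ?thesis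
  proof (cases "c = 0")
    case True thus ?thesis using infdist_zero[OF subspace_0[OF assms]] by simp
  next
    case False
    have "infdist (c *\<^sub>R u) E / \<bar>c\<bar> \<le> infdist u E"
      unfolding infdist_notempty[OF ne, of u]
    proof (rule cINF_greatest[OF ne])
      fix a assume "a \<in> E"
      hence "c *\<^sub>R a \<in> E" using assms subspace_scale by blast
      hence "infdist (c *\<^sub>R u) E \<le> dist (c *\<^sub>R u) (c *\<^sub>R a)" by (rule infdist_le)
      also have "\<dots> = \<bar>c\<bar> * dist u a"
        by (simp add: dist_norm flip: scaleR_diff_right)
      finally show "infdist (c *\<^sub>R u) E / \<bar>c\<bar> \<le> dist u a"
        using False by (simp add: divide_le_eq mult.commute)
    qed
    thus ?thesis using False by (simp add: divide_le_eq mult.commute)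
  qed
qed

lemma infdist_sub_scale:
  fixes E :: "'a::real_normed_vector set"
  assumes "subspace E"
  shows "infdist (c *\<^sub>R u) E = \<bar>c\<bar> * infdist u E"
proof (cases "c = 0")
  case True thus ?thesis using infdist_zero[OF subspace_0[OF assms]] by simp
next
  case False
  have "infdist u E = infdist (inverse c *\<^sub>R (c *\<^sub>R u)) E" using False by simp
  also have "\<dots> \<le> \<bar>inverse c\<bar> * infdist (c *\<^sub>R u) E" by (rule infdist_sub_scale_le[OF assms])
  finally have "\<bar>c\<bar> * infdist u E \<le> infdist (c *\<^sub>R u) E"
    using False by (simp add: field_simps abs_inverse)
  thus ?thesis using infdist_sub_scale_le[OF assms, of c u] by linarith
qed

lemma infdist_sub_minus:
  fixes E :: "'a::real_normed_vector set"
  assumes "subspace E"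
  shows "infdist (- u) E = infdist u E"
  using infdist_sub_scale[OF assms, of "-1" u] by simp

lemma infdist_sub_diff:
  fixes E :: "'a::real_normed_vector set"
  assumes "subspace E"
  shows "infdist (u - v) E \<le> infdist u E + infdist v E"
  using infdist_sub_add[OF assms, of u "-v"] infdist_sub_minus[OF assms, of v] by simp

lemma infdist_sub_plus:
  fixes E :: "'a::real_normed_vector set"
  assumes "subspace E" "z \<in> E"
  shows "infdist (u + z) E = infdist u E"
proof -
  have "infdist (u + z) E \<le> infdist u E" using infdist_sub_add[OF assms(1), of u z] assms by simp
  moreover have "infdist u E \<le> infdist (u + z) E"
    using infdist_sub_add[OF assms(1), of "u+z" "-z"] assms subspace_neg[OF assms(1)] by simp
  ultimately show ?thesis by simp
qed

lemma infdist_sub_le_norm: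
  fixes E :: "'a::real_normed_vector set"
  assumes "subspace E"
  shows "infdist u E \<le> norm u"
  using infdist_le[OF subspace_0[OF assms], of u] by (simp add: dist_norm)

lemma closed_span_finite:
  fixes P :: "'a::real_normed_vector set"
  assumes "finite P"
  shows "closed (span P)"
  using assms
proof (induction P rule: finite_induct)
  case empty thus ?case by simp
next
  case (insert a P)
  define E where "E = span P"
  have sE: "subspace E" unfolding E_def by simp
  have neE: "E \<noteq> {}" using subspace_0[OF sE] by auto
  show ?case
  proof (cases "a \<in> span P")
    case True thus ?thesis by (simp add: span_redundant insert.IH)
  next
    case False
    have cE: "closed E" using insert E_def by simp
    define \<delta> where "\<delta> = infdist a E"
    have \<delta>: "\<delta> > 0" unfolding \<delta>_def using infdist_pos_not_in_closed[OF cE neE] False E_def by auto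
    have "closure (span (insert a P)) \<subseteq> span (insert a P)"
    proof
      fix x assume x: "x \<in> closure (span (insert a P))"
      define \<phi> where "\<phi> k = infdist (x - k *\<^sub>R a) E" for k :: real
      define B where "B = (infdist x E + 1) / \<delta>"
      have cont: "continuous_on (cball 0 B) \<phi>" unfolding \<phi>_def by (intro continuous_intros)
      have "B \<ge> 0" unfolding B_def using \<delta> infdist_nonneg[of x E] by simp
      hence "cball 0 B \<noteq> {}" by simp
      then obtain k0 where k0: "k0 \<in> cball 0 B" "\<And>k. k \<in> cball 0 B \<Longrightarrow> \<phi> k0 \<le> \<phi> k"
        using continuous_attains_inf[OF compact_cball _ cont] by blast
      have "\<phi> k0 \<le> 0"
      proof (rule field_le_epsilon)
        fix e :: real assume e: "0 < e"
        define e' where "e' = min e 1"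
        have e': "0 < e'" "e' \<le> e" "e' \<le> 1" using e unfolding e'_def by auto
        obtain y where y: "y \<in> span (insert a P)" "dist y x < e'"
          using closure_approachable[of x "span (insert a P)"] x e' by auto
        obtain k where k: "y - k *\<^sub>R a \<in> E" using y(1) unfolding span_insert E_def by auto
        have "\<phi> k \<le> dist (x - k *\<^sub>R a) (y - k *\<^sub>R a)" unfolding \<phi>_def by (rule infdist_le[OF k])
        also have "\<dots> = dist y x" by (simp add: dist_norm norm_minus_commute)
        finally have pk: "\<phi> k < e'" using y by simp
        have "\<bar>k\<bar> * \<delta> = infdist (k *\<^sub>R a) E" unfolding \<delta>_def using infdist_sub_scale[OF sE] by simp
        also have "\<dots> = infdist (x - (x - k *\<^sub>R a)) E" by simp
        also have "\<dots> \<le> infdist x E + \<phi> k" unfolding \<phi>_def by (rule infdist_sub_diff[OF sE])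
        finally have "\<bar>k\<bar> * \<delta> \<le> infdist x E + 1" using pk e' by simp
        hence "\<bar>k\<bar> \<le> B" unfolding B_def using \<delta> by (simp add: field_simps)
        hence "k \<in> cball 0 B" by (simp add: dist_norm)
        hence "\<phi> k0 \<le> \<phi> k" by (rule k0)
        thus "\<phi> k0 \<le> 0 + e" using pk e' by simp
      qed
      hence "\<phi> k0 = 0" using infdist_nonneg[of "x - k0 *\<^sub>R a" E] unfolding \<phi>_def by linarith
      hence "x - k0 *\<^sub>R a \<in> E" using in_closed_iff_infdist_zero[OF cE neE] unfolding \<phi>_def by simp
      thus "x \<in> span (insert a P)" unfolding span_insert E_def by auto
    qed
    thus ?thesis by (simp add: closure_subset_eq)
  qed
qed

lemma riesz_step:
  fixes W :: "'a::real_normed_vector set"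
  assumes W: "subspace W" and P: "finite P" "P \<subseteq> W" and nW: "\<not> W \<subseteq> span P"
  shows "\<exists>w\<in>W. norm w = 1 \<and> (\<forall>p\<in>P. norm (w - p) \<ge> 1/2)"
proof -
  define E where "E = span P"
  have sE: "subspace E" unfolding E_def by simp
  have neE: "E \<noteq> {}" using subspace_0[OF sE] by auto
  have cE: "closed E" unfolding E_def using closed_span_finite[OF P(1)] .
  have EW: "E \<subseteq> W" unfolding E_def using span_minimal[OF P(2) W] .
  obtain w0 where w0: "w0 \<in> W" "w0 \<notin> E" using nW E_def by auto
  define d where "d = infdist w0 E"
  have d: "d > 0" unfolding d_def using infdist_pos_not_in_closed[OF cE neE w0(2)] .
  obtain e where e: "e \<in> E" "dist w0 e < 2 * d"
    using infdist_lessE[OF neE, of w0 "2*d"] d unfolding d_def by auto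
  define v where "v = w0 - e"
  have vW: "v \<in> W" unfolding v_def using w0 e EW subspace_diff[OF W] by blast
  have iv: "infdist v E = d" unfolding v_def d_def
    using infdist_sub_plus[OF sE, of "-e" w0] e subspace_neg[OF sE] by simp
  have nv: "norm v < 2 * d" using e unfolding v_def by (simp add: dist_norm)
  have nvd: "d \<le> norm v" using infdist_sub_le_norm[OF sE, of v] iv by simp
  hence v0: "norm v > 0" using d by linarith
  define w where "w = inverse (norm v) *\<^sub>R v"
  have wW: "w \<in> W" unfolding w_def using vW subspace_scale[OF W] by blast
  have nw: "norm w = 1" unfolding w_def using v0 by simp
  have iw: "infdist w E = d / norm v" unfolding w_def
    using infdist_sub_scale[OF sE, of "inverse (norm v)" v] iv v0 by (simp add: field_simps)
  have dv: "d / norm v > 1/2" using nv d v0 by (simp add: field_simps)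
  have sep: "\<forall>p\<in>P. norm (w - p) \<ge> 1/2"
  proof
    fix p assume "p \<in> P"
    hence "p \<in> E" unfolding E_def by (rule span_base)
    hence "infdist w E \<le> dist w p" by (rule infdist_le)
    hence "infdist w E \<le> norm (w - p)" by (simp add: dist_norm)
    thus "norm (w - p) \<ge> 1/2" using iw dv by linarith
  qed
  show ?thesis using wW nw sep by blast
qed

lemma separated_points:
  fixes W :: "'a::real_normed_vector set"
  assumes W: "subspace W" and nW: "\<And>P. finite P \<Longrightarrow> \<not> W \<subseteq> span P"
  shows "\<exists>P. finite P \<and> card P = n \<and> P \<subseteq> W \<and> (\<forall>p\<in>P. norm p = 1) \<and>
             (\<forall>p\<in>P. \<forall>q\<in>P. p \<noteq> q \<longrightarrow> norm (p - q) \<ge> 1/2)"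
proof (induction n)
  case 0 show ?case by (intro exI[of _ "{}"]) auto
next
  case (Suc n)
  from Suc.IH obtain P where P0: "finite P \<and> card P = n \<and> P \<subseteq> W \<and> (\<forall>p\<in>P. norm p = 1) \<and>
    (\<forall>p\<in>P. \<forall>q\<in>P. p \<noteq> q \<longrightarrow> norm (p - q) \<ge> 1/2)" by (elim exE)
  note P = conjunct1[OF P0] conjunct1[OF conjunct2[OF P0]] conjunct1[OF conjunct2[OF conjunct2[OF P0]]]
     conjunct1[OF conjunct2[OF conjunct2[OF conjunct2[OF P0]]]] conjunct2[OF conjunct2[OF conjunct2[OF conjunct2[OF P0]]]]
  obtain w where w: "w \<in> W" "norm w = 1" "\<forall>p\<in>P. norm (w - p) \<ge> 1/2"
    using riesz_step[OF W P(1) P(3) nW[OF P(1)]] by blast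
  have wP: "w \<notin> P"
  proof
    assume "w \<in> P"
    hence "norm (w - w) \<ge> 1/2" using w(3) by blast
    thus False by simp
  qed
  have "finite (insert w P) \<and> card (insert w P) = Suc n \<and> insert w P \<subseteq> W \<and> (\<forall>p\<in>insert w P. norm p = 1) \<and>
             (\<forall>p\<in>insert w P. \<forall>q\<in>insert w P. p \<noteq> q \<longrightarrow> norm (p - q) \<ge> 1/2)"
  proof (intro conjI)
    show "finite (insert w P)" using P(1) by simp
    show "card (insert w P) = Suc n" using P(1,2) wP by simp
    show "insert w P \<subseteq> W" using P(3) w(1) by simp
    show "\<forall>p\<in>insert w P. norm p = 1" using P(4) w(2) by simp
    show "\<forall>p\<in>insert w P. \<forall>q\<in>insert w P. p \<noteq> q \<longrightarrow> norm (p - q) \<ge> 1/2"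
    proof (intro ballI impI)
      fix p q assume pq: "p \<in> insert w P" "q \<in> insert w P" "p \<noteq> q"
      show "norm (p - q) \<ge> 1/2"
      proof (cases "p = w")
        case True thus ?thesis using pq w(3) by simp
      next
        case False
        show ?thesis
        proof (cases "q = w")
          case True thus ?thesis using pq False w(3) norm_minus_commute[of p w] by simp
        next
          case False2: False
          thus ?thesis using pq False P(5) by simp
        qed
      qed
    qed
  qed
  thus ?case by (rule exI)
qed


lemma span_absorb: "span (span A \<union> B) = span (A \<union> B)"
proof -
  have "span A \<union> B \<subseteq> span (A \<union> B)"
    using span_mono[of A "A \<union> B"] span_superset[of "A \<union> B"] by blast
  moreover have "A \<union> B \<subseteq> span (span A \<union> B)"
    using span_superset[of A] span_superset[of "span A \<union> B"] by blast
  ultimately show ?thesis by (simp add: span_eq)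
qed

lemma tb_mod:
  fixes Z :: "'a::real_normed_vector set"
  assumes "finite F" "subspace Z" "span (Z \<union> F) = UNIV" "\<theta> > 0"
  shows "\<exists>C. finite C \<and> (\<forall>x. norm x \<le> Rb \<longrightarrow> (\<exists>c\<in>C. infdist (x - c) Z < \<theta>))"
  using assms
proof (induction F arbitrary: Z \<theta> rule: finite_induct)
  case empty
  hence "Z = UNIV" using span_eq_iff[of Z] by simp
  hence "\<forall>x. infdist (x - 0) Z < \<theta>" using empty by simp
  thus ?case by (intro exI[of _ "{0}"]) auto
next
  case (insert f F)
  define Z' where "Z' = span (insert f Z)"
  have sZ: "subspace Z" using insert by simp
  have sZ': "subspace Z'" unfolding Z'_def by simp
  have "span (Z' \<union> F) = span (insert f Z \<union> F)" unfolding Z'_def by (rule span_absorb)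
  also have "insert f Z \<union> F = Z \<union> insert f F" by auto
  finally have spZ': "span (Z' \<union> F) = UNIV" using insert by simp
  have t2: "\<theta>/2 > 0" using insert by simp
  obtain C' where C': "finite C'" "\<And>x. norm x \<le> Rb \<Longrightarrow> \<exists>c\<in>C'. infdist (x - c) Z' < \<theta>/2"
    using insert.IH[OF sZ' spZ' t2] by blast
  have neZ': "Z' \<noteq> {}" using subspace_0[OF sZ'] by auto
  have spanZ: "span Z = Z" using sZ by simp
  have dec: "\<exists>c'\<in>C'. \<exists>k e. norm e < \<theta>/2 \<and> x - c' - e - k *\<^sub>R f \<in> Z" if x: "norm x \<le> Rb" for x
  proof -
    obtain c' where c': "c' \<in> C'" "infdist (x - c') Z' < \<theta>/2" using C'(2)[OF x] by blast
    obtain y where y: "y \<in> Z'" "dist (x - c') y < \<theta>/2" using infdist_lessE[OF neZ' c'(2)] by blast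
    obtain k where k: "y - k *\<^sub>R f \<in> Z" using y(1) unfolding Z'_def span_insert spanZ by blast
    have "x - c' - (x - c' - y) - k *\<^sub>R f = y - k *\<^sub>R f" by simp
    thus ?thesis using c'(1) y(2) k by (intro bexI[OF _ c'(1)] exI[of _ k] exI[of _ "x - c' - y"]) (auto simp: dist_norm)
  qed
  define \<delta>0 where "\<delta>0 = infdist f Z"
  show ?case
  proof (cases "\<delta>0 = 0")
    case True
    have "\<exists>c\<in>C'. infdist (x - c) Z < \<theta>" if x: "norm x \<le> Rb" for x
    proof -
      obtain c' k e where c': "c' \<in> C'" "norm e < \<theta>/2" "x - c' - e - k *\<^sub>R f \<in> Z" using dec[OF x] by blast
      have "infdist (x - c') Z = infdist (e + k *\<^sub>R f + (x - c' - e - k *\<^sub>R f)) Z" by simp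
      also have "\<dots> = infdist (e + k *\<^sub>R f) Z" by (rule infdist_sub_plus[OF sZ c'(3)])
      also have "\<dots> \<le> infdist e Z + infdist (k *\<^sub>R f) Z" by (rule infdist_sub_add[OF sZ])
      also have "infdist (k *\<^sub>R f) Z = 0" using infdist_sub_scale[OF sZ, of k f] True \<delta>0_def by simp
      finally have "infdist (x - c') Z \<le> infdist e Z" by simp
      also have "\<dots> \<le> norm e" by (rule infdist_sub_le_norm[OF sZ])
      finally show ?thesis using c' insert.prems(3) by (intro bexI[OF _ c'(1)]) linarith
    qed
    thus ?thesis using C'(1) by blast
  next
    case False
    have d0: "\<delta>0 > 0" using False infdist_nonneg[of f Z] \<delta>0_def by linarith
    have d0f: "\<delta>0 \<le> norm f" unfolding \<delta>0_def by (rule infdist_sub_le_norm[OF sZ])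
    define Mc where "Mc = (\<Sum>c\<in>C'. norm c)"
    have Mc: "norm c \<le> Mc" if "c \<in> C'" for c
      unfolding Mc_def using that C'(1) by (intro member_le_sum) auto
    define A0 where "A0 = Rb + Mc + \<theta>/2"
    define \<sigma> where "\<sigma> = \<theta> / (2 * (norm f + 1))"
    have \<sigma>: "\<sigma> > 0" unfolding \<sigma>_def using insert.prems(3) norm_ge_zero[of f] by (intro divide_pos_pos) (simp, smt (verit) norm_ge_zero)
    have nf1: "norm f + 1 > 0" using norm_ge_zero[of f] by linarith
    have h\<sigma>: "\<sigma> * norm f = (\<theta>/2) * (norm f / (norm f + 1))" unfolding \<sigma>_def using nf1 by (simp add: field_simps)
    have "norm f / (norm f + 1) < 1" using nf1 by (simp add: divide_less_eq)
    hence \<sigma>f: "\<sigma> * norm f < \<theta>/2" unfolding h\<sigma> using insert.prems(3)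
      using mult_strict_left_mono[of "norm f / (norm f + 1)" 1 "\<theta>/2"] by simp
    define N where "N = \<lceil>A0 / (\<delta>0 * \<sigma>)\<rceil>"
    define C where "C = (\<lambda>(c, i). c + (real_of_int i * \<sigma>) *\<^sub>R f) ` (C' \<times> {-N..N})"
    have fC: "finite C" unfolding C_def using C'(1) by simp
    have "\<exists>c\<in>C. infdist (x - c) Z < \<theta>" if x: "norm x \<le> Rb" for x
    proof -
      obtain c' k e where c': "c' \<in> C'" "norm e < \<theta>/2" "x - c' - e - k *\<^sub>R f \<in> Z" using dec[OF x] by blast
      have "\<bar>k\<bar> * \<delta>0 = infdist (k *\<^sub>R f) Z" using infdist_sub_scale[OF sZ, of k f] \<delta>0_def by simp
      also have "\<dots> = infdist (k *\<^sub>R f + (x - c' - e - k *\<^sub>R f)) Z" by (rule infdist_sub_plus[OF sZ c'(3), symmetric])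
      also have "\<dots> \<le> norm (k *\<^sub>R f + (x - c' - e - k *\<^sub>R f))" by (rule infdist_sub_le_norm[OF sZ])
      also have "k *\<^sub>R f + (x - c' - e - k *\<^sub>R f) = x - c' - e" by simp
      also have "norm (x - c' - e) \<le> norm x + norm c' + norm e" by (smt (verit) norm_triangle_ineq4 norm_triangle_ineq)
      finally have "\<bar>k\<bar> * \<delta>0 \<le> A0" using x Mc[OF c'(1)] c'(2) unfolding A0_def by linarith
      hence kA: "\<bar>k\<bar> \<le> A0 / \<delta>0" using d0 by (simp add: field_simps)
      define i where "i = \<lfloor>k / \<sigma>\<rfloor>"
      have i1: "real_of_int i * \<sigma> \<le> k" unfolding i_def using \<sigma>
        by (metis floor_divide_lower)
      have i2: "k < real_of_int i * \<sigma> + \<sigma>" unfolding i_def using \<sigma>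
        using floor_divide_upper[OF \<sigma>, of k] by (simp add: algebra_simps)
      have k1: "k \<le> A0 / \<delta>0" "- (A0 / \<delta>0) \<le> k" using kA by linarith+
      have "k / \<sigma> \<le> (A0 / \<delta>0) / \<sigma>" using k1 \<sigma> by (intro divide_right_mono) auto
      hence "k / \<sigma> \<le> A0 / (\<delta>0 * \<sigma>)" by simp
      hence iN1: "i \<le> N" unfolding i_def N_def by (meson floor_le_ceiling le_ceiling_iff floor_mono order_trans)
      have "(- (A0 / \<delta>0)) / \<sigma> \<le> k / \<sigma>" using k1 \<sigma> by (intro divide_right_mono) auto
      hence "- (A0 / (\<delta>0 * \<sigma>)) \<le> k / \<sigma>" by simp
      hence "\<lfloor>- (A0 / (\<delta>0 * \<sigma>))\<rfloor> \<le> i" unfolding i_def by (rule floor_mono)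
      hence iN2: "-N \<le> i" unfolding N_def by (simp add: ceiling_def)
      define c where "c = c' + (real_of_int i * \<sigma>) *\<^sub>R f"
      have cC: "c \<in> C" unfolding C_def c_def using c'(1) iN1 iN2 by force
      have "x - c = (e + (k - real_of_int i * \<sigma>) *\<^sub>R f) + (x - c' - e - k *\<^sub>R f)"
        unfolding c_def by (simp add: algebra_simps)
      hence "infdist (x - c) Z = infdist (e + (k - real_of_int i * \<sigma>) *\<^sub>R f) Z"
        using infdist_sub_plus[OF sZ c'(3), of "e + (k - real_of_int i * \<sigma>) *\<^sub>R f"] by metis
      also have "\<dots> \<le> infdist e Z + infdist ((k - real_of_int i * \<sigma>) *\<^sub>R f) Z" by (rule infdist_sub_add[OF sZ])
      also have "infdist ((k - real_of_int i * \<sigma>) *\<^sub>R f) Z = \<bar>k - real_of_int i * \<sigma>\<bar> * \<delta>0"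
        using infdist_sub_scale[OF sZ] \<delta>0_def by simp
      also have "\<bar>k - real_of_int i * \<sigma>\<bar> * \<delta>0 \<le> \<sigma> * norm f"
        using i1 i2 d0 d0f \<sigma> by (intro mult_mono) auto
      also have "infdist e Z \<le> norm e" by (rule infdist_sub_le_norm[OF sZ])
      finally show ?thesis using c'(2) \<sigma>f cC by (intro bexI[OF _ cC]) linarith
    qed
    thus ?thesis using fC by blast
  qed
qed



lemma fin_codim_not_fin:
  fixes Z :: "'a::real_vector set"
  assumes "infinite_dimensional TYPE('a)" "fin_codim Z" "finite P"
  shows "\<not> Z \<subseteq> span P"
proof
  assume ZP: "Z \<subseteq> span P"
  obtain F where F: "finite F" "span (Z \<union> F) = UNIV" using assms(2) unfolding fin_codim_def by blast
  have "Z \<union> F \<subseteq> span (P \<union> F)" using ZP span_mono[of P "P \<union> F"] span_superset[of "P \<union> F"] by blast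
  hence "span (Z \<union> F) \<subseteq> span (P \<union> F)" using span_mono span_span by metis
  hence "span (P \<union> F) = UNIV" using F by auto
  moreover have "finite (P \<union> F)" using F assms(3) by simp
  ultimately show False using assms(1) unfolding infinite_dimensional_def by blast
qed

lemma fin_codim_unit:
  fixes Z :: "'a::real_normed_vector set"
  assumes "infinite_dimensional TYPE('a)" "fin_codim Z"
  obtains z where "z \<in> Z" "norm z = 1"
proof -
  have "\<not> Z \<subseteq> span {}" using fin_codim_not_fin[OF assms, of "{}"] by simp
  then obtain z0 where z0: "z0 \<in> Z" "z0 \<noteq> 0" by auto
  have sZ: "subspace Z" using assms(2) unfolding fin_codim_def by simp
  have "inverse (norm z0) *\<^sub>R z0 \<in> Z" using z0 sZ subspace_scale by blast
  moreover have "norm (inverse (norm z0) *\<^sub>R z0) = 1" using z0 by simp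
  ultimately show ?thesis using that by blast
qed

lemma fin_codim_UNIV: "fin_codim (UNIV :: 'a::real_vector set)"
  unfolding fin_codim_def by (intro conjI exI[of _ "{}"]) auto

lemma convex_ray:
  fixes u z :: "'a::real_normed_vector"
  assumes "norm u = 1" "0 < \<tau>" "\<tau> \<le> lam" "norm (u + \<tau> *\<^sub>R z) > 1 + A" "A > 0"
  shows "norm (u + lam *\<^sub>R z) > 1 + A"
proof (rule ccontr)
  assume H: "\<not> ?thesis"
  define a where "a = \<tau> / lam"
  have a: "0 < a" "a \<le> 1" using assms unfolding a_def by auto
  have "u + \<tau> *\<^sub>R z = (1 - a) *\<^sub>R u + a *\<^sub>R (u + lam *\<^sub>R z)"
    using assms unfolding a_def by (simp add: algebra_simps)
  hence "norm (u + \<tau> *\<^sub>R z) \<le> norm ((1 - a) *\<^sub>R u) + norm (a *\<^sub>R (u + lam *\<^sub>R z))"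
    by (metis norm_triangle_ineq)
  also have "\<dots> = (1 - a) + a * norm (u + lam *\<^sub>R z)" using a assms(1) by simp
  also have "\<dots> \<le> (1 - a) + a * (1 + A)" using H a by (intro add_left_mono mult_left_mono) auto
  also have "\<dots> \<le> 1 + A" using a assms(5) by (simp add: algebra_simps)
  finally show False using assms(4) by simp
qed


lemma half_half: "(1/2) *\<^sub>R x + (1/2) *\<^sub>R x = (x::'a::real_vector)"
  by (simp flip: scaleR_add_left)

lemma core:
  fixes S :: "'a::real_normed_vector set" and f :: "'a \<Rightarrow> 'b::real_normed_vector"
  assumes infX: "infinite_dimensional TYPE('a)" and infY: "infinite_dimensional TYPE('b)"
    and K: "K \<ge> 0" and E: "E \<ge> 0" and s: "s > 0" and L2: "L2 > 0" and c1: "c1 > 0"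
    and d0: "d0 \<ge> 0" and t: "t > 0" and \<tau>: "\<tau> > 0" and Alo: "A_lo > 0"
    and lip: "\<And>a b. a \<in> S \<Longrightarrow> b \<in> S \<Longrightarrow> norm (a - b) \<ge> s \<Longrightarrow> norm (f a - f b) \<le> L2 * norm (a - b)"
    and cc: "\<And>a b. a \<in> S \<Longrightarrow> b \<in> S \<Longrightarrow> norm (a - b) \<le> s \<Longrightarrow> norm (f a - f b) \<le> Bf"
    and valid: "\<And>a r z. a \<in> S \<Longrightarrow> r \<ge> d0 \<Longrightarrow> norm (z - f a) \<le> r \<Longrightarrow>
                  \<exists>q\<in>S. norm (q - a) \<le> c2 * r \<and> norm (f q - z) \<le> K"
    and uniq: "\<And>q q' z. q \<in> S \<Longrightarrow> q' \<in> S \<Longrightarrow> norm (f q - z) \<le> K \<Longrightarrow> norm (f q' - z) \<le> K \<Longrightarrow>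
                  norm (q - q') \<le> E"
    and x0: "x0 \<in> S" and yr: "norm (y0 - f x0) \<le> r"
    and bad: "\<And>q. q \<in> S \<Longrightarrow> norm (q - x0) \<le> c1 * r \<Longrightarrow> norm (y0 - f q) > K"
    and big: "(c1 / c2) * r - d0 \<ge> R0" and c2: "c2 > 0"
    and N3: "\<And>\<rho>. \<rho> \<ge> R0 \<Longrightarrow> \<rho> * t / 4 - 2 * K > Bf"
    and N4: "\<And>\<rho>. \<rho> \<ge> R0 \<Longrightarrow> (\<rho> * t / 4 - 2 * K) / L2 - 1 \<ge> \<tau> * (c2 * (\<rho> + d0))"
    and N5: "\<And>\<rho>. \<rho> \<ge> R0 \<Longrightarrow> c1 * (1 + A_hi) * \<rho> / 2 \<ge> c2 * ((\<rho> / 2) * (1 + A_lo) + K + d0) + E + 1/2"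
    and Xh: "\<And>u::'a. norm u = 1 \<Longrightarrow> \<exists>Z. fin_codim Z \<and> (\<forall>z\<in>Z. norm z = 1 \<longrightarrow> norm (u + \<tau> *\<^sub>R z) > 1 + A_hi)"
    and Yh: "\<And>v::'b. norm v = 1 \<Longrightarrow> \<exists>W. fin_codim W \<and> (\<forall>w\<in>W. norm w = 1 \<longrightarrow> norm (v + t *\<^sub>R w) < 1 + A_lo)"
    and Ahi: "A_hi > 0"
  shows False
proof -
  define r1 where "r1 = norm (y0 - f x0)"
  have r1r: "r1 \<le> r" using yr r1_def by simp
  obtain w where w: "w \<in> S" "norm (w - x0) \<le> c2 * (r1 + d0)" "norm (f w - y0) \<le> K"
    using valid[OF x0, of "r1 + d0" y0] r1_def d0 by auto
  have wfar: "norm (w - x0) > c1 * r"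
  proof (rule ccontr)
    assume "\<not> ?thesis"
    hence "norm (y0 - f w) > K" using bad[OF w(1)] by simp
    thus False using w(3) by (simp add: norm_minus_commute)
  qed
  have "c1 * r < c2 * (r1 + d0)" using wfar w(2) by simp
  hence "(c1 / c2) * r < r1 + d0" using c2 by (simp add: field_simps)
  hence r1R0: "r1 \<ge> R0" using big by simp
  define D2 where "D2 = norm (x0 - w)"
  have D2lo: "D2 > c1 * r1" using wfar r1r c1 unfolding D2_def
    by (smt (verit) mult_left_mono norm_minus_commute)
  have D2hi: "D2 \<le> c2 * (r1 + d0)" using w(2) unfolding D2_def by (simp add: norm_minus_commute)
  have Bf0: "Bf \<ge> 0" using cc[OF x0 x0] s by simp
  have "r1 * t / 4 > 0" using N3[OF r1R0] K Bf0 by linarith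
  hence "r1 * t > 0" by linarith
  hence r1pos: "r1 > 0" using t by (simp add: zero_less_mult_iff)
  have D2pos: "D2 > 0" using D2lo c1 r1pos by (smt (verit) mult_pos_pos)
  define v where "v = inverse r1 *\<^sub>R (y0 - f x0)"
  have nv: "norm v = 1" unfolding v_def using r1pos r1_def by simp
  have yv: "y0 - f x0 = r1 *\<^sub>R v" unfolding v_def using r1pos by simp
  obtain W where W: "fin_codim W" "\<And>w'. w' \<in> W \<Longrightarrow> norm w' = 1 \<Longrightarrow> norm (v + t *\<^sub>R w') < 1 + A_lo"
    using Yh[OF nv] by blast
  have sW: "subspace W" using W(1) unfolding fin_codim_def by simp
  define u where "u = inverse D2 *\<^sub>R (x0 - w)"
  have nu: "norm u = 1" unfolding u_def using D2pos D2_def by simp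
  have xu: "x0 - w = D2 *\<^sub>R u" unfolding u_def using D2pos by simp
  obtain Z where Z: "fin_codim Z" "\<And>z. z \<in> Z \<Longrightarrow> norm z = 1 \<Longrightarrow> norm (u + \<tau> *\<^sub>R z) > 1 + A_hi"
    using Xh[OF nu] by blast
  have sZ: "subspace Z" using Z(1) unfolding fin_codim_def by simp
  obtain F where F: "finite F" "span (Z \<union> F) = UNIV" using Z(1) unfolding fin_codim_def by blast
  define MY where "MY = (r1 / 2) * (1 + A_lo)"
  define M where "M = c2 * (MY + K + d0) + E"
  obtain C where C: "finite C" "\<And>x. norm x \<le> M \<Longrightarrow> \<exists>c\<in>C. infdist (x - c) Z < 1/2"
    using tb_mod[OF F(1) sZ F(2), of "1/2" M] by auto
  have nW: "\<And>P. finite P \<Longrightarrow> \<not> W \<subseteq> span P" using fin_codim_not_fin[OF infY W(1)] by blast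
  have exP: "\<exists>P. finite P \<and> card P = Suc (card C) \<and> P \<subseteq> W \<and> (\<forall>p\<in>P. norm p = 1) \<and>
    (\<forall>p\<in>P. \<forall>q\<in>P. p \<noteq> q \<longrightarrow> norm (p - q) \<ge> 1/2)"
  proof (rule separated_points[OF sW])
    fix P :: "'b set" assume "finite P" thus "\<not> W \<subseteq> span P" by (rule nW)
  qed
  obtain P where P0: "finite P \<and> card P = Suc (card C) \<and> P \<subseteq> W \<and> (\<forall>p\<in>P. norm p = 1) \<and>
    (\<forall>p\<in>P. \<forall>q\<in>P. p \<noteq> q \<longrightarrow> norm (p - q) \<ge> 1/2)"
    using exP by (elim exE)
  note P = conjunct1[OF P0] conjunct1[OF conjunct2[OF P0]] conjunct1[OF conjunct2[OF conjunct2[OF P0]]]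
     conjunct1[OF conjunct2[OF conjunct2[OF conjunct2[OF P0]]]] conjunct2[OF conjunct2[OF conjunct2[OF conjunct2[OF P0]]]]
  define pt where "pt \<omega> = f x0 + (r1/2) *\<^sub>R (v + t *\<^sub>R \<omega>)" for \<omega>
  have pt1: "norm (pt \<omega> - f x0) < MY" if "\<omega> \<in> P" for \<omega>
  proof -
    have "pt \<omega> - f x0 = (r1/2) *\<^sub>R (v + t *\<^sub>R \<omega>)" unfolding pt_def by simp
    moreover have "norm (v + t *\<^sub>R \<omega>) < 1 + A_lo" using W(2) P(3,4) that by blast
    ultimately show ?thesis unfolding MY_def using r1pos by simp
  qed
  have pt2: "norm (y0 - pt \<omega>) < MY" if "\<omega> \<in> P" for \<omega>
  proof -
    have y0e: "y0 = f x0 + r1 *\<^sub>R v" using yv by (simp add: algebra_simps)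
    have r1v: "r1 *\<^sub>R v = (r1/2) *\<^sub>R v + (r1/2) *\<^sub>R v" by (simp flip: scaleR_add_left)
    have "y0 - pt \<omega> = (r1/2) *\<^sub>R (v + t *\<^sub>R (- \<omega>))"
      unfolding pt_def y0e r1v by (simp add: scaleR_add_right scaleR_diff_right)
    moreover have mW: "- \<omega> \<in> W" using P(3) that sW subspace_neg by blast
    moreover have "norm (v + t *\<^sub>R (- \<omega>)) < 1 + A_lo" using W(2)[OF mW] P(4) that by simp
    ultimately show ?thesis unfolding MY_def using r1pos by simp
  qed
  have "\<forall>\<omega>\<in>P. \<exists>q. q \<in> S \<and> norm (q - x0) \<le> M \<and> norm (q - w) \<le> M \<and> norm (f q - pt \<omega>) \<le> K"
  proof
    fix \<omega> assume om: "\<omega> \<in> P"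
    obtain q where q: "q \<in> S" "norm (q - x0) \<le> c2 * (norm (pt \<omega> - f x0) + d0)" "norm (f q - pt \<omega>) \<le> K"
      using valid[OF x0, of "norm (pt \<omega> - f x0) + d0" "pt \<omega>"] d0 by auto
    have "c2 * (norm (pt \<omega> - f x0) + d0) \<le> c2 * (MY + d0)"
      using pt1[OF om] c2 by (intro mult_left_mono) auto
    hence "norm (q - x0) \<le> c2 * (MY + d0)" using q(2) by linarith
    moreover have "c2 * (MY + d0) \<le> c2 * (MY + K + d0)" using c2 K by (intro mult_left_mono) auto
    ultimately have qx: "norm (q - x0) \<le> M" unfolding M_def using E by linarith
    have "y0 - f q = (y0 - pt \<omega>) - (f q - pt \<omega>)" by simp
    hence "norm (y0 - f q) \<le> norm (y0 - pt \<omega>) + norm (f q - pt \<omega>)" by (metis norm_triangle_ineq4)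
    hence yq: "norm (y0 - f q) \<le> MY + K" using pt2[OF om] q(3) by linarith
    obtain w' where w': "w' \<in> S" "norm (w' - q) \<le> c2 * (norm (y0 - f q) + d0)" "norm (f w' - y0) \<le> K"
      using valid[OF q(1), of "norm (y0 - f q) + d0" y0] d0 by auto
    have "c2 * (norm (y0 - f q) + d0) \<le> c2 * (MY + K + d0)" using yq c2 by (intro mult_left_mono) auto
    hence wq: "norm (w' - q) \<le> c2 * (MY + K + d0)" using w'(2) by linarith
    have ww: "norm (w' - w) \<le> E" using uniq[OF w'(1) w(1) w'(3) w(3)] .
    have "q - w = (w' - w) - (w' - q)" by simp
    hence "norm (q - w) \<le> norm (w' - w) + norm (w' - q)" by (metis norm_triangle_ineq4)
    hence "norm (q - w) \<le> M" unfolding M_def using wq ww by linarith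
    thus "\<exists>q. q \<in> S \<and> norm (q - x0) \<le> M \<and> norm (q - w) \<le> M \<and> norm (f q - pt \<omega>) \<le> K"
      using q qx by blast
  qed
  then have "\<exists>Q. \<forall>\<omega>\<in>P. Q \<omega> \<in> S \<and> norm (Q \<omega> - x0) \<le> M \<and> norm (Q \<omega> - w) \<le> M \<and> norm (f (Q \<omega>) - pt \<omega>) \<le> K"
    by (rule bchoice)
  then obtain Q where Q0: "\<forall>\<omega>\<in>P. Q \<omega> \<in> S \<and> norm (Q \<omega> - x0) \<le> M \<and> norm (Q \<omega> - w) \<le> M \<and> norm (f (Q \<omega>) - pt \<omega>) \<le> K"
    by (elim exE)
  have Q: "Q \<omega> \<in> S" "norm (Q \<omega> - x0) \<le> M" "norm (Q \<omega> - w) \<le> M" "norm (f (Q \<omega>) - pt \<omega>) \<le> K"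
    if "\<omega> \<in> P" for \<omega> using Q0 that by auto
  have "\<forall>\<omega>\<in>P. \<exists>c. c \<in> C \<and> infdist (Q \<omega> - x0 - c) Z < 1/2"
  proof
    fix \<omega> assume "\<omega> \<in> P"
    then obtain c where "c \<in> C" "infdist (Q \<omega> - x0 - c) Z < 1/2" using C(2) Q(2) by blast
    thus "\<exists>c. c \<in> C \<and> infdist (Q \<omega> - x0 - c) Z < 1/2" by blast
  qed
  then have "\<exists>cf. \<forall>\<omega>\<in>P. cf \<omega> \<in> C \<and> infdist (Q \<omega> - x0 - cf \<omega>) Z < 1/2" by (rule bchoice)
  then obtain cf where cf0: "\<forall>\<omega>\<in>P. cf \<omega> \<in> C \<and> infdist (Q \<omega> - x0 - cf \<omega>) Z < 1/2"
    by (elim exE)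
  have cf: "cf \<omega> \<in> C" "infdist (Q \<omega> - x0 - cf \<omega>) Z < 1/2" if "\<omega> \<in> P" for \<omega> using cf0 that by auto
  have "\<not> inj_on cf P"
  proof
    assume "inj_on cf P"
    moreover have "cf ` P \<subseteq> C" using cf(1) by blast
    ultimately have "card P \<le> card C" using card_inj_on_le[of cf P C] C(1) by blast
    thus False using P(2) by simp
  qed
  then obtain \<omega>1 \<omega>2 where om: "\<omega>1 \<in> P" "\<omega>2 \<in> P" "\<omega>1 \<noteq> \<omega>2" "cf \<omega>1 = cf \<omega>2"
    unfolding inj_on_def by blast
  define q1 where "q1 = Q \<omega>1"
  define q2 where "q2 = Q \<omega>2"
  have i1: "infdist (Q \<omega>1 - x0 - cf \<omega>1) Z < 1/2" "infdist (Q \<omega>2 - x0 - cf \<omega>2) Z < 1/2"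
    using cf(2)[OF om(1)] cf(2)[OF om(2)] by auto
  have "infdist ((Q \<omega>1 - x0 - cf \<omega>1) - (Q \<omega>2 - x0 - cf \<omega>2)) Z < 1"
    using infdist_sub_diff[OF sZ, of "Q \<omega>1 - x0 - cf \<omega>1" "Q \<omega>2 - x0 - cf \<omega>2"] i1 by linarith
  moreover have "(Q \<omega>1 - x0 - cf \<omega>1) - (Q \<omega>2 - x0 - cf \<omega>2) = q1 - q2"
    using om(4) unfolding q1_def q2_def by simp
  ultimately have iq: "infdist (q1 - q2) Z < 1" by simp
  have neZ: "Z \<noteq> {}" using subspace_0[OF sZ] by auto
  obtain h where h: "h \<in> Z" "dist (q1 - q2) h < 1"
    using infdist_lessE[OF neZ iq] by blast
  have h2: "norm (q1 - q2 - h) < 1" using h(2) by (simp add: dist_norm)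
  have pp: "norm (pt \<omega>1 - pt \<omega>2) \<ge> r1 * t / 4"
  proof -
    have "pt \<omega>1 - pt \<omega>2 = (r1/2) *\<^sub>R (t *\<^sub>R \<omega>1 - t *\<^sub>R \<omega>2)" unfolding pt_def
      by (simp add: scaleR_add_right scaleR_diff_right)
    also have "\<dots> = (r1 * t / 2) *\<^sub>R (\<omega>1 - \<omega>2)" by (simp add: scaleR_diff_right)
    finally have "norm (pt \<omega>1 - pt \<omega>2) = (r1 * t / 2) * norm (\<omega>1 - \<omega>2)" using r1pos t by simp
    moreover have "norm (\<omega>1 - \<omega>2) \<ge> 1/2" using P(5) om(1,2,3) by blast
    moreover have "(r1 * t / 2) * (1/2) \<le> (r1 * t / 2) * norm (\<omega>1 - \<omega>2)"
      using calculation(2) r1pos t by (intro mult_left_mono) auto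
    ultimately show ?thesis by simp
  qed
  have qS: "q1 \<in> S" "q2 \<in> S" using Q(1) om unfolding q1_def q2_def by auto
  have fq: "norm (f q1 - f q2) \<ge> r1 * t / 4 - 2 * K"
  proof -
    have a: "norm (f q1 - pt \<omega>1) \<le> K" "norm (f q2 - pt \<omega>2) \<le> K" using Q(4) om unfolding q1_def q2_def by auto
    have "pt \<omega>1 - pt \<omega>2 = ((f q1 - f q2) - (f q1 - pt \<omega>1)) + (f q2 - pt \<omega>2)" by simp
    hence "norm (pt \<omega>1 - pt \<omega>2) \<le> norm ((f q1 - f q2) - (f q1 - pt \<omega>1)) + norm (f q2 - pt \<omega>2)"
      by (metis norm_triangle_ineq)
    moreover have "norm ((f q1 - f q2) - (f q1 - pt \<omega>1)) \<le> norm (f q1 - f q2) + norm (f q1 - pt \<omega>1)"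
      by (rule norm_triangle_ineq4)
    ultimately show ?thesis using a pp by linarith
  qed
  have qs: "norm (q1 - q2) > s"
  proof (rule ccontr)
    assume "\<not> ?thesis"
    hence "norm (f q1 - f q2) \<le> Bf" using cc[OF qS] by simp
    thus False using fq N3[OF r1R0] by simp
  qed
  have "L2 * norm (q1 - q2) \<ge> r1 * t / 4 - 2 * K" using lip[OF qS] qs fq by simp
  hence "norm (q1 - q2) \<ge> (r1 * t / 4 - 2 * K) / L2" using L2 by (simp add: field_simps)
  moreover have "norm (q1 - q2) \<le> norm h + norm (q1 - q2 - h)"
    by (metis add.commute diff_add_cancel norm_triangle_ineq)
  moreover have "\<tau> * D2 \<le> \<tau> * (c2 * (r1 + d0))" using D2hi \<tau> by (intro mult_left_mono) auto
  ultimately have nh: "norm h \<ge> \<tau> * D2" using N4[OF r1R0] h2 by linarith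
  have "\<tau> * D2 > 0" using \<tau> D2pos by simp
  hence hpos: "norm h > 0" using nh by linarith
  define lam where "lam = norm h / D2"
  define z where "z = - (inverse (norm h) *\<^sub>R h)"
  have zZ: "z \<in> Z" unfolding z_def using h(1) sZ subspace_neg subspace_scale by blast
  have nz: "norm z = 1" unfolding z_def using hpos by simp
  have lam: "\<tau> \<le> lam" unfolding lam_def using nh D2pos by (simp add: field_simps)
  have big2: "norm (u + lam *\<^sub>R z) > 1 + A_hi"
    by (rule convex_ray[OF nu \<tau> lam Z(2)[OF zZ nz] Ahi])
  define p where "p = (1/2) *\<^sub>R (x0 + w) + (1/2) *\<^sub>R h"
  have lz: "lam *\<^sub>R z = - (inverse D2 *\<^sub>R h)" unfolding lam_def z_def using hpos D2pos by (simp add: divide_inverse)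
  have "(D2 / 2) *\<^sub>R (u + lam *\<^sub>R z) = (1/2) *\<^sub>R (D2 *\<^sub>R u) - (1/2) *\<^sub>R h"
    unfolding lz using D2pos by (simp add: scaleR_add_right scaleR_diff_right)
  also have "\<dots> = (1/2) *\<^sub>R (x0 - w) - (1/2) *\<^sub>R h" unfolding xu ..
  also have "\<dots> = x0 - p" unfolding p_def by (simp add: algebra_simps half_half)
  finally have xp: "x0 - p = (D2 / 2) *\<^sub>R (u + lam *\<^sub>R z)" by simp
  have "(D2 / 2) * (1 + A_hi) < (D2 / 2) * norm (u + lam *\<^sub>R z)"
    using big2 D2pos by (intro mult_strict_left_mono) auto
  hence lowp: "norm (x0 - p) > (D2 / 2) * (1 + A_hi)" unfolding xp using D2pos by simp
  have "x0 - p = (1/2) *\<^sub>R ((x0 - q1) + (q2 - w) + (q1 - q2 - h))" unfolding p_def by (simp add: algebra_simps half_half)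
  hence "norm (x0 - p) = (1/2) * norm ((x0 - q1) + (q2 - w) + (q1 - q2 - h))" by simp
  moreover have "norm ((x0 - q1) + (q2 - w) + (q1 - q2 - h)) \<le> norm ((x0 - q1) + (q2 - w)) + norm (q1 - q2 - h)"
    by (rule norm_triangle_ineq)
  moreover have "norm ((x0 - q1) + (q2 - w)) \<le> norm (x0 - q1) + norm (q2 - w)"
    by (rule norm_triangle_ineq)
  moreover have "norm (x0 - q1) \<le> M" using Q(2) om unfolding q1_def by (auto simp: norm_minus_commute)
  moreover have "norm (q2 - w) \<le> M" using Q(3) om unfolding q2_def by auto
  ultimately have upp: "norm (x0 - p) \<le> M + 1/2" using h2 by linarith
  have "(c1 * r1) * (1 + A_hi) \<le> D2 * (1 + A_hi)" using D2lo Ahi by (intro mult_right_mono) auto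
  moreover have "c1 * (1 + A_hi) * r1 / 2 \<ge> M + 1/2" using N5[OF r1R0] unfolding M_def MY_def by simp
  ultimately show False using lowp upp by (simp add: algebra_simps)
qed


lemma delta_extract:
  fixes u :: "'a::real_normed_vector"
  assumes infX: "infinite_dimensional TYPE('a)" and nu: "norm u = 1"
    and lt: "a < delta_bar TYPE('a) \<tau>"
  shows "\<exists>Z. fin_codim Z \<and> (\<forall>z\<in>Z. norm z = 1 \<longrightarrow> norm (u + \<tau> *\<^sub>R z) > 1 + a)"
proof -
  define H where "H x Z = (INF z\<in>sphere 0 1 \<inter> Z. norm (x + \<tau> *\<^sub>R z))" for x :: 'a and Z
  define G where "G x = (SUP Z\<in>{Z. fin_codim Z}. H x Z)" for x
  have dd: "delta_bar TYPE('a) \<tau> = (INF x\<in>sphere 0 1. G x) - 1"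
    unfolding delta_bar_def H_def G_def by simp
  have bb: "bdd_below ((\<lambda>z. norm (x + \<tau> *\<^sub>R z)) ` A)" for x A
    by (rule bdd_belowI[where m=0]) auto
  have Hle: "H x Z \<le> norm x + \<bar>\<tau>\<bar>" if fZ: "fin_codim Z" for x Z
  proof -
    obtain z0 where z0: "z0 \<in> Z" "norm z0 = 1" using fin_codim_unit[OF infX fZ] by blast
    have "H x Z \<le> norm (x + \<tau> *\<^sub>R z0)" unfolding H_def
      by (rule cINF_lower[OF bb]) (use z0 in simp)
    also have "\<dots> \<le> norm x + norm (\<tau> *\<^sub>R z0)" by (rule norm_triangle_ineq)
    finally show ?thesis using z0 by simp
  qed
  have H0: "H x Z \<ge> 0" if fZ: "fin_codim Z" for x Z
  proof -
    obtain z0 where z0: "z0 \<in> Z" "norm z0 = 1" using fin_codim_unit[OF infX fZ] by blast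
    have ne: "sphere 0 1 \<inter> Z \<noteq> {}" using z0 by auto
    show ?thesis unfolding H_def by (rule cINF_greatest[OF ne]) simp
  qed
  have ba: "bdd_above ((\<lambda>Z. H x Z) ` {Z. fin_codim Z})" for x
    by (rule bdd_aboveI[where M="norm x + \<bar>\<tau>\<bar>"]) (use Hle in auto)
  have Gge: "H x Z \<le> G x" if fZ: "fin_codim Z" for x Z
    unfolding G_def by (rule cSUP_upper[OF _ ba]) (use that in simp)
  have G0: "G x \<ge> 0" for x using Gge[OF fin_codim_UNIV, of x] H0[OF fin_codim_UNIV, of x] by linarith
  have bG: "bdd_below (G ` sphere 0 1)" by (rule bdd_belowI[where m=0]) (use G0 in auto)
  have "(INF x\<in>sphere 0 1. G x) \<le> G u" by (rule cINF_lower[OF bG]) (use nu in simp)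
  hence "1 + a < G u" using lt dd by linarith
  hence "1 + a < (SUP Z\<in>{Z. fin_codim Z}. H u Z)" unfolding G_def .
  moreover have "{Z. fin_codim Z} \<noteq> {}" using fin_codim_UNIV by blast
  ultimately obtain Z where Z: "fin_codim Z" "1 + a < H u Z"
    using less_cSUP_iff[OF _ ba] by blast
  have "\<forall>z\<in>Z. norm z = 1 \<longrightarrow> norm (u + \<tau> *\<^sub>R z) > 1 + a"
  proof (intro ballI impI)
    fix z assume "z \<in> Z" "norm z = 1"
    hence "H u Z \<le> norm (u + \<tau> *\<^sub>R z)" unfolding H_def by (intro cINF_lower[OF bb]) simp
    thus "norm (u + \<tau> *\<^sub>R z) > 1 + a" using Z(2) by linarith
  qed
  thus ?thesis using Z(1) by blast
qed

lemma rho_extract: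
  fixes v :: "'b::real_normed_vector"
  assumes infY: "infinite_dimensional TYPE('b)" and nv: "norm v = 1"
    and lt: "rho_bar TYPE('b) t < a"
  shows "\<exists>W. fin_codim W \<and> (\<forall>w\<in>W. norm w = 1 \<longrightarrow> norm (v + t *\<^sub>R w) < 1 + a)"
proof -
  define H where "H y W = (SUP w\<in>sphere 0 1 \<inter> W. norm (y + t *\<^sub>R w))" for y :: 'b and W
  define G where "G y = (INF W\<in>{W. fin_codim W}. H y W)" for y
  have rr: "rho_bar TYPE('b) t = (SUP y\<in>sphere 0 1. G y) - 1"
    unfolding rho_bar_def H_def G_def by simp
  have ba: "bdd_above ((\<lambda>w. norm (y + t *\<^sub>R w)) ` (sphere 0 1 \<inter> W))" for y W
  proof (rule bdd_aboveI[where M="norm y + \<bar>t\<bar>"])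
    fix r assume "r \<in> (\<lambda>w. norm (y + t *\<^sub>R w)) ` (sphere 0 1 \<inter> W)"
    then obtain w where w: "norm w = 1" "r = norm (y + t *\<^sub>R w)" by auto
    have "norm (y + t *\<^sub>R w) \<le> norm y + norm (t *\<^sub>R w)" by (rule norm_triangle_ineq)
    thus "r \<le> norm y + \<bar>t\<bar>" using w by simp
  qed
  have Hle: "H y W \<le> norm y + \<bar>t\<bar>" if fZ: "fin_codim W" for y W
  proof -
    obtain z0 where z0: "z0 \<in> W" "norm z0 = 1" using fin_codim_unit[OF infY fZ] by blast
    have ne: "sphere 0 1 \<inter> W \<noteq> {}" using z0 by auto
    show ?thesis unfolding H_def
    proof (rule cSUP_least[OF ne])
      fix w assume "w \<in> sphere 0 1 \<inter> W"
      hence "norm w = 1" by simp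
      moreover have "norm (y + t *\<^sub>R w) \<le> norm y + norm (t *\<^sub>R w)" by (rule norm_triangle_ineq)
      ultimately show "norm (y + t *\<^sub>R w) \<le> norm y + \<bar>t\<bar>" by simp
    qed
  qed
  have H0: "H y W \<ge> 0" if fZ: "fin_codim W" for y W
  proof -
    obtain z0 where z0: "z0 \<in> W" "norm z0 = 1" using fin_codim_unit[OF infY fZ] by blast
    have "norm (y + t *\<^sub>R z0) \<le> H y W" unfolding H_def by (rule cSUP_upper[OF _ ba]) (use z0 in simp)
    thus ?thesis by (smt (verit) norm_ge_zero)
  qed
  have bbH: "bdd_below ((\<lambda>W. H y W) ` {W. fin_codim W})" for y
    by (rule bdd_belowI[where m=0]) (use H0 in auto)
  have Gle: "G y \<le> norm y + \<bar>t\<bar>" for y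
  proof -
    have "G y \<le> H y UNIV" unfolding G_def by (rule cINF_lower[OF bbH]) (simp add: fin_codim_UNIV)
    thus ?thesis using Hle[OF fin_codim_UNIV, of y] by linarith
  qed
  have bG: "bdd_above (G ` sphere 0 1)"
  proof (rule bdd_aboveI[where M="1 + \<bar>t\<bar>"])
    fix r assume "r \<in> G ` sphere 0 1"
    then obtain y where "norm y = 1" "r = G y" by auto
    thus "r \<le> 1 + \<bar>t\<bar>" using Gle[of y] by simp
  qed
  have "G v \<le> (SUP y\<in>sphere 0 1. G y)" by (rule cSUP_upper[OF _ bG]) (use nv in simp)
  hence "G v < 1 + a" using lt rr by linarith
  hence "(INF W\<in>{W. fin_codim W}. H v W) < 1 + a" unfolding G_def .
  moreover have "{W. fin_codim W} \<noteq> {}" using fin_codim_UNIV by blast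
  ultimately obtain W where W: "fin_codim W" "H v W < 1 + a"
    using cINF_less_iff[OF _ bbH] by blast
  have "\<forall>w\<in>W. norm w = 1 \<longrightarrow> norm (v + t *\<^sub>R w) < 1 + a"
  proof (intro ballI impI)
    fix w assume "w \<in> W" "norm w = 1"
    hence "norm (v + t *\<^sub>R w) \<le> H v W" unfolding H_def by (intro cSUP_upper[OF _ ba]) simp
    thus "norm (v + t *\<^sub>R w) < 1 + a" using W(2) by linarith
  qed
  thus ?thesis using W(1) by blast
qed

lemma alpha_pos:
  fixes l cc \<eta> t :: real
  assumes "l > 0" "cc > 0" "0 \<le> \<eta>" "\<eta> < 1" "t > 0"
  shows "t / (4 * (l * (1 + \<eta>))) - t / (56 * l * cc) * (cc * (1 + \<eta>)) > 0"
proof -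
  have e: "t / (56 * l * cc) * (cc * (1 + \<eta>)) = (t / l) * ((1 + \<eta>) / 56)" using assms by (simp add: field_simps)
  have e2: "t / (4 * (l * (1 + \<eta>))) = (t / l) * (1 / (4 * (1 + \<eta>)))" using assms by (simp add: field_simps)
  have "(1 + \<eta>) * (1 + \<eta>) < 2 * 2" using assms by (intro mult_strict_mono) auto
  hence "(1 + \<eta>) * (1 + \<eta>) < 14" by simp
  hence X: "(1 + \<eta>) / 56 < 1 / (4 * (1 + \<eta>))" using assms by (simp add: field_simps)
  have "t / l > 0" using assms by simp
  hence "(t / l) * ((1 + \<eta>) / 56) < (t / l) * (1 / (4 * (1 + \<eta>)))" using X by (rule mult_strict_left_mono[rotated])
  thus ?thesis unfolding e e2 by linarith
qed

lemma beta_pos: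
  fixes cc A_lo A_hi :: real
  assumes "cc > 0" "0 < A_lo" "A_lo < A_hi"
  defines "\<eta> \<equiv> (A_hi - A_lo) / (2 * (2 + A_hi + A_lo))"
  shows "cc * (1 - \<eta>) * (1 + A_hi) - cc * (1 + \<eta>) * (1 + A_lo) > 0"
proof -
  have p: "2 + A_hi + A_lo > 0" using assms by simp
  have "(1 - \<eta>) * (1 + A_hi) - (1 + \<eta>) * (1 + A_lo) = (A_hi - A_lo) - \<eta> * (2 + A_hi + A_lo)"
    by (simp add: algebra_simps)
  also have "\<eta> * (2 + A_hi + A_lo) = (A_hi - A_lo) / 2" unfolding \<eta>_def using p by (simp add: field_simps)
  finally have "(1 - \<eta>) * (1 + A_hi) - (1 + \<eta>) * (1 + A_lo) > 0" using assms by simp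
  hence "cc * ((1 - \<eta>) * (1 + A_hi) - (1 + \<eta>) * (1 + A_lo)) > 0" using assms by simp
  thus ?thesis by (simp add: algebra_simps)
qed



lemma Lip_inf_not_neg:
  assumes "Lip_inf S f = ereal l"
  shows "l \<ge> 0"
proof (rule ccontr)
  assume "\<not> l \<ge> 0"
  hence "Lip_inf S f < 0" using assms by simp
  then obtain s where s: "s \<in> {0<..}" "Lip_s S f s < 0" unfolding Lip_inf_def by (auto simp: INF_less_iff)
  let ?A = "{ereal (norm (f x - f y) / norm (x - y)) |x y. x \<in> S \<and> y \<in> S \<and> norm (x - y) \<ge> s}"
  have "?A = {}"
  proof (rule ccontr)
    assume "?A \<noteq> {}"
    then obtain a where a: "a \<in> ?A" by blast
    hence "a \<ge> 0" by auto
    moreover have "a \<le> Sup ?A" using a by (rule Sup_upper)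
    ultimately show False using s(2) unfolding Lip_s_def by simp
  qed
  have "Lip_s S f s = Sup ?A" unfolding Lip_s_def ..
  also have "\<dots> = -\<infinity>" unfolding \<open>?A = {}\<close> by (simp add: bot_ereal_def)
  finally have "Lip_s S f s = -\<infinity>" .
  hence "Lip_inf S f \<le> -\<infinity>" unfolding Lip_inf_def using s(1) by (metis INF_lower)
  thus False using assms by simp
qed

lemma c_inf_nonneg: "c_inf S f K \<ge> 0"
  unfolding c_inf_def c_d_def by (intro INF_greatest Inf_greatest) auto

theorem theorem4p5:
  fixes S :: "'a::banach set" and f :: "'a \<Rightarrow> 'b::banach" and g :: "'b \<Rightarrow> 'a" and K :: real
  assumes "infinite_dimensional TYPE('a)" and "infinite_dimensional TYPE('b)"
    and "coarsely_continuous_on S f"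
    and "coarse_Lipschitz_on S f"
    and "g ` UNIV \<subseteq> S"
    and "coarsely_continuous_on UNIV g"
    and "bdd_above {norm (g (f x) - x) |x. x \<in> S}"
    and "bdd_above (range (\<lambda>y. norm (f (g y) - y)))"
    and "K = (SUP y. norm (f (g y) - y))"
  shows "\<forall>t. 0 < t \<and> t \<le> 1 \<longrightarrow>
    delta_bar TYPE('a) (t / real_of_ereal (56 * Lip_inf S f * c_inf S f K)) \<le> rho_bar TYPE('b) t"
proof (intro allI impI)
  fix t :: real assume tt: "0 < t \<and> t \<le> 1"
  have t: "t > 0" using tt by simp
  note infX = assms(1) and infY = assms(2)
  define L where "L = Lip_inf S f"
  define cI where "cI = c_inf S f K"
  define \<tau> where "\<tau> = t / real_of_ereal (56 * L * cI)"
  show "delta_bar TYPE('a) (t / real_of_ereal (56 * Lip_inf S f * c_inf S f K)) \<le> rho_bar TYPE('b) t"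
  proof (rule ccontr)
    assume "\<not> ?thesis"
    hence lt: "rho_bar TYPE('b) t < delta_bar TYPE('a) \<tau>" unfolding \<tau>_def L_def cI_def by simp
    define \<rho> where "\<rho> = rho_bar TYPE('b) t"
    define \<delta> where "\<delta> = delta_bar TYPE('a) \<tau>"
    define A_lo where "A_lo = \<rho> + (\<delta> - \<rho>) / 4"
    define A_hi where "A_hi = \<rho> + 3 * (\<delta> - \<rho>) / 4"
    have lohi: "A_lo < A_hi" "\<rho> < A_lo" "A_hi < \<delta>" using lt unfolding A_lo_def A_hi_def \<rho>_def[symmetric] \<delta>_def[symmetric] by (auto simp: field_simps)
    have Yh: "\<exists>W. fin_codim W \<and> (\<forall>w\<in>W. norm w = 1 \<longrightarrow> norm (v + t *\<^sub>R w) < 1 + A_lo)"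
      if "norm v = 1" for v :: 'b
      using rho_extract[OF infY that, of t A_lo] lohi \<rho>_def by simp
    have Xh: "\<exists>Z. fin_codim Z \<and> (\<forall>z\<in>Z. norm z = 1 \<longrightarrow> norm (u + \<tau> *\<^sub>R z) > 1 + A_hi)"
      if "norm u = 1" for u :: 'a
      using delta_extract[OF infX that, of A_hi \<tau>] lohi \<delta>_def by simp
    obtain v0 :: 'b where v0: "norm v0 = 1" using fin_codim_unit[OF infY fin_codim_UNIV] by blast
    obtain W0 where W0: "fin_codim W0" "\<forall>w\<in>W0. norm w = 1 \<longrightarrow> norm (v0 + t *\<^sub>R w) < 1 + A_lo"
      using Yh[OF v0] by blast
    obtain w0 where w0: "w0 \<in> W0" "norm w0 = 1" using fin_codim_unit[OF infY W0(1)] by blast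
    have "- w0 \<in> W0" using w0 W0(1) subspace_neg unfolding fin_codim_def by blast
    hence a1: "norm (v0 - t *\<^sub>R w0) < 1 + A_lo" using W0(2) w0 by (metis norm_minus_cancel scaleR_minus_right diff_conv_add_uminus)
    have a2: "norm (v0 + t *\<^sub>R w0) < 1 + A_lo" using W0(2) w0 by blast
    have "(2::real) = norm ((v0 + t *\<^sub>R w0) + (v0 - t *\<^sub>R w0))" using v0
      by (simp add: scaleR_2[symmetric] del: scaleR_2)
    also have "\<dots> \<le> norm (v0 + t *\<^sub>R w0) + norm (v0 - t *\<^sub>R w0)" by (rule norm_triangle_ineq)
    finally have Alo: "A_lo > 0" using a1 a2 by linarith
    have Ahi: "A_hi > 0" using Alo lohi by simp
    show False
    proof (cases "real_of_ereal (56 * L * cI) = 0")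
      case True
      hence \<tau>0: "\<tau> = 0" unfolding \<tau>_def by simp
      obtain u :: 'a where u: "norm u = 1" using fin_codim_unit[OF infX fin_codim_UNIV] by blast
      obtain Z where Z: "fin_codim Z" "\<forall>z\<in>Z. norm z = 1 \<longrightarrow> norm (u + \<tau> *\<^sub>R z) > 1 + A_hi"
        using Xh[OF u] by blast
      obtain z where "z \<in> Z" "norm z = 1" using fin_codim_unit[OF infX Z(1)] by blast
      hence "norm u > 1 + A_hi" using Z(2) \<tau>0 by auto
      thus False using u Ahi by simp
    next
      case False
      have cI0: "cI \<ge> 0" unfolding cI_def by (rule c_inf_nonneg)
      obtain l cc where lc: "L = ereal l" "cI = ereal cc"
      proof (cases L)
        case (real l)
        show ?thesis
        proof (cases cI)
          case (real cc) thus ?thesis using \<open>L = ereal l\<close> that by blast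
        next
          case PInf thus ?thesis using False real by (cases "l = 0"; cases "0 < l") (auto simp: ereal_mult_infty)
        next
          case MInf thus ?thesis using cI0 by simp
        qed
      next
        case PInf thus ?thesis using False cI0 by (cases "cI = 0"; cases "0 < cI") (auto simp: ereal_mult_infty)
      next
        case MInf thus ?thesis using False cI0 by (cases "cI = 0"; cases "0 < cI") (auto simp: ereal_mult_infty)
      qed
      have l0: "l \<ge> 0" using Lip_inf_not_neg[of S f l] lc(1) L_def by simp
      have cc0: "cc \<ge> 0" using cI0 lc(2) by simp
      have Peq: "real_of_ereal (56 * L * cI) = 56 * l * cc" using lc by simp
      have "56 * l * cc \<noteq> 0" using False unfolding Peq .
      hence lpos: "l > 0" and ccpos: "cc > 0" using l0 cc0 by auto
      have \<tau>eq: "\<tau> = t / (56 * l * cc)" unfolding \<tau>_def Peq ..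
      have \<tau>pos: "\<tau> > 0" using t lpos ccpos \<tau>eq by simp
      have Kb: "norm (f (g y) - y) \<le> K" for y using cSUP_upper[OF UNIV_I assms(8)] assms(9) by simp
      have K0: "K \<ge> 0" using Kb[of 0] norm_ge_zero[of "f (g 0) - 0"] by linarith
      obtain C1 where C1: "\<And>x. x \<in> S \<Longrightarrow> norm (g (f x) - x) \<le> C1"
        using assms(7) unfolding bdd_above_def by blast
      have cg: "\<forall>t>0. bdd_above {dist (g x) (g y) |x y. x \<in> UNIV \<and> y \<in> UNIV \<and> dist x y \<le> t}"
        using assms(6) unfolding coarsely_continuous_on_def .
      have "bdd_above {dist (g x) (g y) |x y. x \<in> UNIV \<and> y \<in> UNIV \<and> dist x y \<le> 2 * K + 1}"
        using cg[rule_format, of "2 * K + 1"] K0 by simp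
      then obtain Bg where Bg0: "\<forall>z\<in>{dist (g x) (g y) |x y. x \<in> UNIV \<and> y \<in> UNIV \<and> dist x y \<le> 2 * K + 1}. z \<le> Bg"
        unfolding bdd_above_def by blast
      have Bg: "dist (g a) (g b) \<le> Bg" if "dist a b \<le> 2 * K + 1" for a b using Bg0 that by blast
      have gS: "g 0 \<in> S" using assms(5) by blast
      have C10: "C1 \<ge> 0" using C1[OF gS] norm_ge_zero[of "g (f (g 0)) - g 0"] by linarith
      have Bg00: "Bg \<ge> 0" using Bg[of 0 0] K0 by simp
      define E where "E = 2 * C1 + Bg"
      have E0: "E \<ge> 0" unfolding E_def using C10 Bg00 by simp
      have uniq: "norm (q - q') \<le> E" if q: "q \<in> S" "q' \<in> S" "norm (f q - z) \<le> K" "norm (f q' - z) \<le> K"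
        for q q' z
      proof -
        have "f q - f q' = (f q - z) - (f q' - z)" by simp
        hence "norm (f q - f q') \<le> norm (f q - z) + norm (f q' - z)" by (metis norm_triangle_ineq4)
        hence "dist (f q) (f q') \<le> 2 * K + 1" using q by (simp add: dist_norm)
        hence gg: "norm (g (f q) - g (f q')) \<le> Bg" using Bg by (simp add: dist_norm)
        have "q - q' = (g (f q') - q') - (g (f q) - q) + (g (f q) - g (f q'))" by simp
        hence "norm (q - q') \<le> norm ((g (f q') - q') - (g (f q) - q)) + norm (g (f q) - g (f q'))"
          by (metis norm_triangle_ineq)
        moreover have "norm ((g (f q') - q') - (g (f q) - q)) \<le> norm (g (f q') - q') + norm (g (f q) - q)"
          by (rule norm_triangle_ineq4)
        ultimately show ?thesis using C1[OF q(1)] C1[OF q(2)] gg unfolding E_def by linarith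
      qed
      define \<eta> where "\<eta> = (A_hi - A_lo) / (2 * (2 + A_hi + A_lo))"
      have pd: "2 + A_hi + A_lo > 0" using Alo Ahi by simp
      have \<eta>0: "\<eta> > 0" unfolding \<eta>_def using lohi pd by simp
      have \<eta>1: "\<eta> < 1" unfolding \<eta>_def using lohi pd Alo by (simp add: field_simps)
      define L2 where "L2 = l * (1 + \<eta>)"
      have L2pos: "L2 > 0" unfolding L2_def using lpos \<eta>0 by simp
      have "Lip_inf S f < ereal L2" using lc(1) L_def L2_def lpos \<eta>0 by simp
      then obtain s where s: "s > 0" "Lip_s S f s < ereal L2" unfolding Lip_inf_def by (auto simp: INF_less_iff)
      have lip: "norm (f a - f b) \<le> L2 * norm (a - b)" if ab: "a \<in> S" "b \<in> S" "norm (a - b) \<ge> s" for a b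
      proof -
        have "ereal (norm (f a - f b) / norm (a - b)) \<le> Lip_s S f s"
          unfolding Lip_s_def by (rule Sup_upper) (use ab in blast)
        hence "ereal (norm (f a - f b) / norm (a - b)) < ereal L2" using s(2) by (rule le_less_trans)
        hence "norm (f a - f b) / norm (a - b) < L2" by simp
        moreover have "norm (a - b) > 0" using ab(3) s(1) by linarith
        ultimately show ?thesis by (simp add: divide_less_eq less_imp_le)
      qed
      have cfS: "\<forall>t>0. bdd_above {dist (f x) (f y) |x y. x \<in> S \<and> y \<in> S \<and> dist x y \<le> t}"
        using assms(3) unfolding coarsely_continuous_on_def .
      have "bdd_above {dist (f x) (f y) |x y. x \<in> S \<and> y \<in> S \<and> dist x y \<le> s}"
        using cfS[rule_format, of s] s by simp
      then obtain Bf where Bf0: "\<forall>z\<in>{dist (f x) (f y) |x y. x \<in> S \<and> y \<in> S \<and> dist x y \<le> s}. z \<le> Bf"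
        unfolding bdd_above_def by blast
      have ccf: "norm (f a - f b) \<le> Bf" if "a \<in> S" "b \<in> S" "norm (a - b) \<le> s" for a b
        using Bf0 that by (auto simp: dist_norm)
      define c2 where "c2 = cc * (1 + \<eta>)"
      define c1 where "c1 = cc * (1 - \<eta>)"
      have c2pos: "c2 > 0" unfolding c2_def using ccpos \<eta>0 by simp
      have c1pos: "c1 > 0" unfolding c1_def using ccpos \<eta>1 by simp
      have c1cc: "c1 < cc" unfolding c1_def using ccpos \<eta>0 by simp
      have "c_inf S f K < ereal c2" using lc(2) cI_def c2_def ccpos \<eta>0 by simp
      then obtain d0 where d0: "d0 > K" "c_d S f K d0 < ereal c2" unfolding c_inf_def by (auto simp: INF_less_iff)
      then obtain c0 where c0: "c0 > 0" "\<forall>x\<in>S. \<forall>r\<ge>d0. cball (f x) r \<subseteq> nbhd (f ` (S \<inter> cball x (c0 * r))) K"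
        "ereal c0 < ereal c2"
        unfolding c_d_def by (auto simp: Inf_less_iff)
      have d00: "d0 \<ge> 0" using d0 K0 by simp
      have valid: "\<exists>q\<in>S. norm (q - a) \<le> c2 * r \<and> norm (f q - z) \<le> K"
        if a: "a \<in> S" "r \<ge> d0" "norm (z - f a) \<le> r" for a r z
      proof -
        have "z \<in> cball (f a) r" using a(3) by (simp add: dist_norm norm_minus_commute)
        hence "z \<in> nbhd (f ` (S \<inter> cball a (c0 * r))) K" using c0(2) a by blast
        then obtain q where q: "q \<in> S" "dist a q \<le> c0 * r" "norm (z - f q) \<le> K" unfolding nbhd_def by auto
        have "c0 * r \<le> c2 * r" using c0(3) a(2) d00 by (intro mult_right_mono) auto
        hence "norm (q - a) \<le> c2 * r" using q(2) by (simp add: dist_norm norm_minus_commute)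
        thus ?thesis using q by (auto simp: norm_minus_commute)
      qed
      define \<alpha> where "\<alpha> = t / (4 * L2) - \<tau> * c2"
      have \<alpha>: "\<alpha> > 0" unfolding \<alpha>_def L2_def c2_def \<tau>eq
        using alpha_pos[OF lpos ccpos less_imp_le[OF \<eta>0] \<eta>1 t] .
      define \<beta> where "\<beta> = (c1 * (1 + A_hi) - c2 * (1 + A_lo)) / 2"
      have \<beta>: "\<beta> > 0" unfolding \<beta>_def c1_def c2_def \<eta>_def
        using beta_pos[OF ccpos Alo lohi(1)] by simp
      define T1 where "T1 = 4 * (\<bar>Bf\<bar> + 2 * K) / t + 1"
      define X2 where "X2 = 2 * K / L2 + 1 + \<tau> * c2 * d0"
      define X3 where "X3 = c2 * (K + d0) + E + 1/2"
      define R0 where "R0 = T1 + X2 / \<alpha> + X3 / \<beta>"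
      have T10: "T1 \<ge> 0" unfolding T1_def using K0 t by simp
      have X20: "X2 / \<alpha> \<ge> 0" unfolding X2_def using K0 L2pos \<tau>pos c2pos d00 \<alpha> by simp
      have X30: "X3 / \<beta> \<ge> 0" unfolding X3_def using K0 E0 c2pos d00 \<beta> by simp
      have N3: "\<rho>' * t / 4 - 2 * K > Bf" if "\<rho>' \<ge> R0" for \<rho>'
      proof -
        have "\<rho>' \<ge> T1" using that X20 X30 unfolding R0_def by linarith
        hence "\<rho>' * t \<ge> T1 * t" using t by (simp add: mult_right_mono)
        also have "T1 * t = 4 * (\<bar>Bf\<bar> + 2 * K) + t" unfolding T1_def using t by (simp add: field_simps)
        finally have "4 * (\<bar>Bf\<bar> + 2 * K) + t \<le> \<rho>' * t" .
        thus ?thesis using t abs_ge_self[of Bf] by (simp add: field_simps)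
      qed
      have N4: "(\<rho>' * t / 4 - 2 * K) / L2 - 1 \<ge> \<tau> * (c2 * (\<rho>' + d0))" if "\<rho>' \<ge> R0" for \<rho>'
      proof -
        have "\<rho>' \<ge> X2 / \<alpha>" using that T10 X30 unfolding R0_def by linarith
        hence "\<rho>' * \<alpha> \<ge> (X2 / \<alpha>) * \<alpha>" using \<alpha> by (intro mult_right_mono) auto
        hence "\<rho>' * \<alpha> \<ge> X2" using \<alpha> by simp
        moreover have "(\<rho>' * t / 4 - 2 * K) / L2 - 1 - \<tau> * (c2 * (\<rho>' + d0)) = \<rho>' * \<alpha> - X2"
          unfolding \<alpha>_def X2_def using L2pos by (simp add: field_simps)
        ultimately show ?thesis by linarith
      qed
      have N5: "c1 * (1 + A_hi) * \<rho>' / 2 \<ge> c2 * ((\<rho>' / 2) * (1 + A_lo) + K + d0) + E + 1/2"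
        if "\<rho>' \<ge> R0" for \<rho>'
      proof -
        have "\<rho>' \<ge> X3 / \<beta>" using that T10 X20 unfolding R0_def by linarith
        hence "\<rho>' * \<beta> \<ge> (X3 / \<beta>) * \<beta>" using \<beta> by (intro mult_right_mono) auto
        hence "\<rho>' * \<beta> \<ge> X3" using \<beta> by simp
        moreover have "c1 * (1 + A_hi) * \<rho>' / 2 - (c2 * ((\<rho>' / 2) * (1 + A_lo) + K + d0) + E + 1/2) = \<rho>' * \<beta> - X3"
          unfolding \<beta>_def X3_def by (simp add: field_simps)
        ultimately show ?thesis by linarith
      qed
      define D where "D = max (K + 1) ((R0 + d0) * c2 / c1)"
      have DK: "D \<in> {K<..}" unfolding D_def by simp
      have "cI \<le> c_d S f K D" unfolding cI_def c_inf_def by (rule INF_lower[OF DK])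
      hence ccD: "ereal cc \<le> c_d S f K D" using lc(2) by simp
      have "\<not> (\<forall>x\<in>S. \<forall>r\<ge>D. cball (f x) r \<subseteq> nbhd (f ` (S \<inter> cball x (c1 * r))) K)"
      proof
        assume H: "\<forall>x\<in>S. \<forall>r\<ge>D. cball (f x) r \<subseteq> nbhd (f ` (S \<inter> cball x (c1 * r))) K"
        have "c_d S f K D \<le> ereal c1" unfolding c_d_def by (rule Inf_lower) (use H c1pos in blast)
        hence "ereal cc \<le> ereal c1" using ccD by (rule order_trans[rotated])
        thus False using c1cc by simp
      qed
      then obtain x0 r y0 where x0: "x0 \<in> S" and rD: "r \<ge> D" and y0: "y0 \<in> cball (f x0) r"
        and y0n: "y0 \<notin> nbhd (f ` (S \<inter> cball x0 (c1 * r))) K" by blast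
      have yr: "norm (y0 - f x0) \<le> r" using y0 by (simp add: dist_norm norm_minus_commute)
      have bad: "norm (y0 - f q) > K" if "q \<in> S" "norm (q - x0) \<le> c1 * r" for q
      proof (rule ccontr)
        assume "\<not> ?thesis"
        moreover have "f q \<in> f ` (S \<inter> cball x0 (c1 * r))" using that by (simp add: dist_norm norm_minus_commute)
        ultimately have "y0 \<in> nbhd (f ` (S \<inter> cball x0 (c1 * r))) K" unfolding nbhd_def by force
        thus False using y0n by simp
      qed
      have "r \<ge> (R0 + d0) * c2 / c1" using rD unfolding D_def by simp
      hence "(c1 / c2) * r \<ge> (c1 / c2) * ((R0 + d0) * c2 / c1)" using c1pos c2pos by (intro mult_left_mono) auto
      hence big: "(c1 / c2) * r - d0 \<ge> R0" using c1pos c2pos by simp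
      show False
        by (rule core[OF infX infY K0 E0 s(1) L2pos c1pos d00 t \<tau>pos Alo lip ccf valid uniq x0 yr bad big c2pos N3 N4 N5 Xh Yh Ahi])


    qed
  qed
qed



end
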